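(* Let $m,n\ge1$, $\mathcal{H}=\mathbb{R}^{m\times n}$ with $\langle\mathbf{A},\mathbf{B}\rangle_{\mathcal{H}}=\mathbf{A}^\intercal\mathbf{B}$, and let $\mathbf{V}\in\mathbb{R}^{n\times n}$ be a nonzero symmetric matrix such that $\langle\langle\mathbf{X},\mathbf{X}\rangle_{\mathcal{H}},\mathbf{V}/\|\mathbf{V}\|\rangle\ge0$ for all $\mathbf{X}\in\mathcal{H}$. Let $\mathcal{S}=\{\mathbf{X}_1,\dots,\mathbf{X}_N\}$ be a finite set of matrices in $\mathbb{R}^{m\times n}$ and define $$\mathcal{H}_{\max}\circ\mathcal{S}=\Big\{\Big(\big\langle\langle\mathbf{W},\mathbf{X}_1\rangle_{\mathcal{H}},\tfrac{\mathbf{V}}{\|\mathbf{V}\|}\big\rangle,\dots,\big\langle\langle\mathbf{W},\mathbf{X}_N\rangle_{\mathcal{H}},\tfrac{\mathbf{V}}{\|\mathbf{V}\|}\big\rangle\Big):\ \|\mathbf{W}\|_{\max}\le1\Big\}\subseteq\mathbb{R}^N.$$ Then $$R(\mathcal{H}_{\max}\circ\mathcal{S})\le n\max_{1\le i\le N}\|\mathbf{X}_i\|_1\sqrt{\frac{2(m\ln2+\ln n)}{N}}.$$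
   Context: $\langle\cdot,\cdot\rangle$ is the Frobenius inner product and $\|\mathbf{V}\|$ the Frobenius norm. For $\mathbf{X}\in\mathbb{R}^{m\times n}$: $\|\mathbf{X}\|_1=\max_{1\le j\le n}\sum_{i=1}^m|x_{ij}|$ and $\|\mathbf{X}\|_{\max}=\max_{i,j}|x_{ij}|$ (maximum over all entries). For $\mathcal{A}\subseteq\mathbb{R}^N$, the Rademacher complexity is $R(\mathcal{A})=\frac1N\mathbb{E}_{\bm\sigma}\big[\sup_{\mathbf{a}\in\mathcal{A}}\sum_{i=1}^N\sigma_ia_i\big]$, where $\sigma_1,\dots,\sigma_N$ are i.i.d. uniform on $\{\pm1\}$. *)

theory Defs
  imports "HOL-Analysis.Analysis"
begin

text \<open>Matrices in R^(m x n) are rendered as real^'n^'m (row index 'm, column index 'n).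
  The library inner product / norm on this type are the Frobenius ones.\<close>

definition mat_norm1 :: "real^'n^'m \<Rightarrow> real" where
  "mat_norm1 X = Max (range (\<lambda>j. \<Sum>i\<in>UNIV. \<bar>X $ i $ j\<bar>))"

definition mat_norm_max :: "real^'n^'m \<Rightarrow> real" where
  "mat_norm_max X = Max {\<bar>X $ i $ j\<bar> | i j. True}"

text \<open>Rademacher complexity of a set A of vectors in R^N (vectors given by their
  coordinates 0..N-1): expectation over uniform sign vectors, as an average over {-1,1}^N.\<close>

definition rademacher :: "nat \<Rightarrow> (nat \<Rightarrow> real) set \<Rightarrow> real" where
  "rademacher N A = (1 / real N) *
     ((\<Sum>\<sigma>\<in>PiE {..<N} (\<lambda>_. {-1, 1::real}). (SUP a\<in>A. \<Sum>i<N. \<sigma> i * a i)) / 2 ^ N)"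

end

theory Submission
  imports Defs "HOL-Probability.Hoeffding"
begin

lemma cosh_bound: fixes x :: real shows "(exp x + exp (-x)) / 2 \<le> exp (x^2/2)"
proof -
  have main: "(exp y + exp (-y)) / 2 \<le> exp (y^2/2)" if "y \<ge> 0" for y :: real
  proof -
    have "-(2*y)*(1/2) + ln (1 + (1/2) * (exp (2*y) - 1)) \<le> (2*y)^2/8"
      using Hoeffdings_lemma_aux[of "2*y" "1/2"] that by simp
    hence "ln ((1 + exp (2*y))/2) \<le> y^2/2 + y"
      by (simp add: field_simps power2_eq_square)
    hence "(1 + exp (2*y))/2 \<le> exp (y^2/2 + y)"
      by (metis add_pos_pos exp_gt_zero exp_le_cancel_iff exp_ln half_gt_zero zero_less_one)
    hence "(1 + exp (2*y))/2 * exp (-y) \<le> exp (y^2/2 + y) * exp (-y)"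
      by (intro mult_right_mono) auto
    moreover have "(1 + exp (2*y))/2 * exp (-y) = (exp y + exp (-y)) / 2"
      by (simp add: field_simps flip: exp_add)
    moreover have "exp (y^2/2 + y) * exp (-y) = exp (y^2/2)"
      by (simp flip: exp_add)
    ultimately show ?thesis by simp
  qed
  show ?thesis
  proof (cases "x \<ge> 0")
    case True thus ?thesis using main by simp
  next
    case False thus ?thesis using main[of "-x"] by (simp add: add.commute)
  qed
qed

lemma card_signs: "card (PiE {..<N} (\<lambda>_. {-1, 1::real})) = 2 ^ N"
  by (simp add: card_PiE numeral_2_eq_2)

lemma avg_exp:
  fixes a :: "nat \<Rightarrow> real" and l :: real
  shows "(\<Sum>\<sigma>\<in>PiE {..<N} (\<lambda>_. {-1, 1::real}). exp (l * (\<Sum>t<N. \<sigma> t * a t))) / 2 ^ N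
           \<le> exp (l^2 * (\<Sum>t<N. (a t)^2) / 2)"
proof -
  have "(\<Sum>\<sigma>\<in>PiE {..<N} (\<lambda>_. {-1, 1::real}). exp (l * (\<Sum>t<N. \<sigma> t * a t)))
      = (\<Sum>\<sigma>\<in>PiE {..<N} (\<lambda>_. {-1, 1::real}). \<Prod>t<N. exp (l * a t * \<sigma> t))"
    by (intro sum.cong refl) (simp add: sum_distrib_left exp_sum mult_ac)
  also have "\<dots> = (\<Prod>t<N. \<Sum>y\<in>{-1,1::real}. exp (l * a t * y))"
    by (rule prod_sum_PiE[symmetric]) auto
  also have "\<dots> \<le> (\<Prod>t<N. 2 * exp ((l * a t)^2 / 2))"
  proof (intro prod_mono conjI)
    fix t
    show "0 \<le> (\<Sum>y\<in>{-1,1::real}. exp (l * a t * y))" by (intro sum_nonneg) auto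
    show "(\<Sum>y\<in>{-1,1::real}. exp (l * a t * y)) \<le> 2 * exp ((l * a t)^2 / 2)"
      using cosh_bound[of "l * a t"] by simp
  qed
  also have "\<dots> = 2 ^ N * exp (l^2 * (\<Sum>t<N. (a t)^2) / 2)"
    by (simp add: prod.distrib exp_sum[symmetric] sum_divide_distrib sum_distrib_left power_mult_distrib)
  finally show ?thesis by (simp add: field_simps)
qed


lemma massart:
  fixes a :: "'k \<Rightarrow> nat \<Rightarrow> real"
  assumes finI: "finite I" and cardI: "card I \<ge> 2" and N: "N \<ge> 1"
    and bnd: "\<And>k t. k \<in> I \<Longrightarrow> t < N \<Longrightarrow> \<bar>a k t\<bar> \<le> M"
  shows "(\<Sum>\<sigma>\<in>PiE {..<N} (\<lambda>_. {-1, 1::real}). Max ((\<lambda>k. \<Sum>t<N. \<sigma> t * a k t) ` I)) / 2 ^ N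
           \<le> M * sqrt (2 * real N * ln (real (card I)))"
proof -
  define Sg where "Sg = PiE {..<N} (\<lambda>_. {-1, 1::real})"
  define Z where "Z = (\<lambda>\<sigma>. Max ((\<lambda>k. \<Sum>t<N. \<sigma> t * a k t) ` I))"
  have Ine: "I \<noteq> {}" using cardI by auto
  then obtain k0 where k0: "k0 \<in> I" by auto
  have M0: "M \<ge> 0" using bnd[OF k0, of 0] N by linarith
  have finSg: "finite Sg" unfolding Sg_def by (intro finite_PiE) auto
  have cardSg: "card Sg = 2 ^ N" unfolding Sg_def by (simp add: card_PiE numeral_2_eq_2)
  have Sgne: "Sg \<noteq> {}" using cardSg by auto
  show ?thesis
  proof (cases "M = 0")
    case True
    have "Z \<sigma> = 0" for \<sigma>
    proof -
      have "(\<lambda>k. \<Sum>t<N. \<sigma> t * a k t) ` I = {0}"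
        using Ine bnd True by auto
      thus ?thesis unfolding Z_def by simp
    qed
    thus ?thesis using True unfolding Z_def by simp
  next
    case False
    hence Mpos: "M > 0" using M0 by simp
    define L where "L = ln (real (card I))"
    have Lpos: "L > 0" unfolding L_def using cardI by simp
    define s where "s = sqrt (2 * real N * L)"
    have spos: "s > 0" unfolding s_def using Lpos N by simp
    have s2: "s^2 = 2 * real N * L" unfolding s_def using Lpos by simp
    define l where "l = s / (real N * M)"
    have lpos: "l > 0" unfolding l_def using spos Mpos N by simp
    define avg where "avg = (\<Sum>\<sigma>\<in>Sg. (1 / 2^N) * Z \<sigma>)"
    have avg_eq: "avg = (\<Sum>\<sigma>\<in>Sg. Z \<sigma>) / 2 ^ N"
      unfolding avg_def by (simp add: sum_divide_distrib)
    have "exp (l * avg) = exp (\<Sum>\<sigma>\<in>Sg. (1 / 2^N) *\<^sub>R (l * Z \<sigma>))"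
      unfolding avg_def by (simp add: sum_distrib_left mult_ac)
    also have "\<dots> \<le> (\<Sum>\<sigma>\<in>Sg. (1 / 2^N) * exp (l * Z \<sigma>))"
      by (rule convex_on_sum[OF finSg Sgne exp_convex]) (auto simp: cardSg)
    also have "\<dots> \<le> (\<Sum>\<sigma>\<in>Sg. (1 / 2^N) * (\<Sum>k\<in>I. exp (l * (\<Sum>t<N. \<sigma> t * a k t))))"
    proof (intro sum_mono mult_left_mono)
      fix \<sigma>
      have "Z \<sigma> \<in> (\<lambda>k. \<Sum>t<N. \<sigma> t * a k t) ` I"
        unfolding Z_def using finI Ine by (intro Max_in) auto
      then obtain k where k: "k \<in> I" "Z \<sigma> = (\<Sum>t<N. \<sigma> t * a k t)" by auto
      show "exp (l * Z \<sigma>) \<le> (\<Sum>k\<in>I. exp (l * (\<Sum>t<N. \<sigma> t * a k t)))"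
        unfolding k(2) using k(1) finI
        by (intro member_le_sum) auto
    qed auto
    also have "\<dots> = (\<Sum>k\<in>I. (\<Sum>\<sigma>\<in>Sg. exp (l * (\<Sum>t<N. \<sigma> t * a k t))) / 2 ^ N)"
      by (simp add: sum_distrib_left sum_divide_distrib sum.swap[of _ Sg I])
    also have "\<dots> \<le> (\<Sum>k\<in>I. exp (l^2 * (real N * M^2) / 2))"
    proof (intro sum_mono)
      fix k assume k: "k \<in> I"
      have "(\<Sum>t<N. (a k t)^2) \<le> (\<Sum>t<N. M^2)"
      proof (intro sum_mono)
        fix t assume "t \<in> {..<N}"
        hence "\<bar>a k t\<bar> \<le> M" using bnd k by auto
        hence "\<bar>a k t\<bar>^2 \<le> M^2" by (intro power_mono) auto
        thus "(a k t)^2 \<le> M^2" by simp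
      qed
      hence "l^2 * (\<Sum>t<N. (a k t)^2) / 2 \<le> l^2 * (real N * M^2) / 2"
        by (intro divide_right_mono mult_left_mono) auto
      with avg_exp[of l "a k" N]
      show "(\<Sum>\<sigma>\<in>Sg. exp (l * (\<Sum>t<N. \<sigma> t * a k t))) / 2 ^ N \<le> exp (l^2 * (real N * M^2) / 2)"
        unfolding Sg_def by (meson exp_le_cancel_iff order_trans)
    qed
    also have "\<dots> = real (card I) * exp L"
    proof -
      have "l^2 * (real N * M^2) / 2 = L"
        unfolding l_def using s2 Mpos N by (simp add: field_simps power2_eq_square)
      thus ?thesis by simp
    qed
    also have "\<dots> = exp (L + L)"
    proof -
      have "exp L = real (card I)" unfolding L_def using cardI by simp
      thus ?thesis by (simp only: exp_add)
    qed
    finally have "l * avg \<le> 2 * L" by simp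
    hence "avg \<le> 2 * L / l" using lpos by (simp add: field_simps)
    also have "2 * L / l = M * s"
      unfolding l_def using s2 spos Mpos N by (simp add: field_simps power2_eq_square)
    finally show ?thesis
      unfolding avg_eq Z_def Sg_def s_def L_def by simp
  qed
qed


lemma inner_expand:
  fixes W X :: "real^'n^'m" and U :: "real^'n^'n"
  shows "inner (transpose W ** X) U = (\<Sum>k\<in>UNIV. \<Sum>l\<in>UNIV. \<Sum>i\<in>UNIV. W$i$k * X$i$l * U$k$l)"
  by (simp add: inner_vec_def matrix_matrix_mult_def transpose_def sum_distrib_right)

lemma sum_expand:
  fixes W :: "real^'n^'m" and X :: "nat \<Rightarrow> real^'n^'m" and U :: "real^'n^'n"
  shows "(\<Sum>t<N. \<sigma> t * inner (transpose W ** X t) U)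
     = (\<Sum>k\<in>UNIV. \<Sum>l\<in>UNIV. \<Sum>i\<in>UNIV. W$i$k * (\<Sum>t<N. \<sigma> t * X t $i$l) * U$k$l)"
proof -
  have "(\<Sum>t<N. \<sigma> t * inner (transpose W ** X t) U)
     = (\<Sum>t<N. \<Sum>k\<in>UNIV. \<Sum>l\<in>UNIV. \<Sum>i\<in>UNIV. W$i$k * (\<sigma> t * X t $i$l) * U$k$l)"
    by (simp add: inner_expand sum_distrib_left mult_ac)
  also have "\<dots> = (\<Sum>k\<in>UNIV. \<Sum>t<N. \<Sum>l\<in>UNIV. \<Sum>i\<in>UNIV. W$i$k * (\<sigma> t * X t $i$l) * U$k$l)"
    by (rule sum.swap)
  also have "\<dots> = (\<Sum>k\<in>UNIV. \<Sum>l\<in>UNIV. \<Sum>t<N. \<Sum>i\<in>UNIV. W$i$k * (\<sigma> t * X t $i$l) * U$k$l)"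
    by (intro sum.cong refl sum.swap)
  also have "\<dots> = (\<Sum>k\<in>UNIV. \<Sum>l\<in>UNIV. \<Sum>i\<in>UNIV. \<Sum>t<N. W$i$k * (\<sigma> t * X t $i$l) * U$k$l)"
    by (intro sum.cong refl sum.swap)
  also have "\<dots> = (\<Sum>k\<in>UNIV. \<Sum>l\<in>UNIV. \<Sum>i\<in>UNIV. W$i$k * (\<Sum>t<N. \<sigma> t * X t $i$l) * U$k$l)"
    by (simp add: sum_distrib_left sum_distrib_right)
  finally show ?thesis .
qed

lemma abs_entry_sum:
  fixes U :: "real^'n^'n"
  assumes "norm U = 1"
  shows "(\<Sum>k\<in>UNIV. \<Sum>l\<in>UNIV. \<bar>U$k$l\<bar>) \<le> real CARD('n)"
proof -
  define n where "n = real CARD('n)"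
  have npos: "n > 0" unfolding n_def by simp
  have sq: "(\<Sum>k\<in>UNIV. \<Sum>l\<in>UNIV. (U$k$l)^2) = 1"
  proof -
    have "norm U ^ 2 = inner U U" by (rule power2_norm_eq_inner)
    thus ?thesis using assms by (simp add: inner_vec_def power2_eq_square)
  qed
  have el: "\<bar>u\<bar> \<le> (n * u^2 + 1 / n) / 2" for u :: real
  proof -
    have "n * u^2 + 1 / n - 2 * \<bar>u\<bar> = (n * \<bar>u\<bar> - 1)^2 / n"
      using npos by (simp add: field_simps power2_eq_square)
    also have "\<dots> \<ge> 0" using npos by simp
    finally show ?thesis by simp
  qed
  have "(\<Sum>k\<in>UNIV. \<Sum>l\<in>UNIV. \<bar>U$k$l\<bar>) \<le> (\<Sum>k\<in>(UNIV::'n set). \<Sum>l\<in>(UNIV::'n set). (n * (U$k$l)^2 + 1 / n) / 2)"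
    by (intro sum_mono el)
  also have "\<dots> = (n * (\<Sum>k\<in>UNIV. \<Sum>l\<in>UNIV. (U$k$l)^2) + n * n * (1 / n)) / 2"
    by (simp only: sum_divide_distrib[symmetric] sum.distrib sum_distrib_left[symmetric])
       (simp add: n_def)
  also have "\<dots> = n" using npos sq by simp
  finally show ?thesis unfolding n_def .
qed


lemma norm_max_entry:
  fixes W :: "real^'n^'m"
  shows "\<bar>W$i$k\<bar> \<le> mat_norm_max W"
proof -
  have "{\<bar>W$i$j\<bar> | i j. True} = (\<lambda>(i,j). \<bar>W$i$j\<bar>) ` UNIV" by auto
  hence fin: "finite {\<bar>W$i$j\<bar> | i j. True}" by simp
  show ?thesis unfolding mat_norm_max_def by (rule Max_ge[OF fin]) auto
qed

lemma pointwise: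
  fixes W :: "real^'n^'m" and X :: "nat \<Rightarrow> real^'n^'m" and U :: "real^'n^'n"
  assumes W: "mat_norm_max W \<le> 1" and U: "norm U = 1"
  shows "(\<Sum>t<N. \<sigma> t * inner (transpose W ** X t) U)
     \<le> real CARD('n) * Max (range (\<lambda>l. \<Sum>i\<in>UNIV. \<bar>\<Sum>t<N. \<sigma> t * X t $i$l\<bar>))"
proof -
  define S where "S = (\<lambda>i l. \<Sum>t<N. \<sigma> t * X t $i$l)"
  define G where "G = Max (range (\<lambda>l. \<Sum>i\<in>UNIV. \<bar>S i l\<bar>))"
  have Wb: "\<bar>W$i$k\<bar> \<le> 1" for i k using norm_max_entry[of W i k] W by linarith
  have Gl: "(\<Sum>i\<in>UNIV. \<bar>S i l\<bar>) \<le> G" for l unfolding G_def by (rule Max_ge) auto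
  have G0: "G \<ge> 0" using Gl[of undefined] by (meson order_trans sum_nonneg abs_ge_zero)
  have "(\<Sum>t<N. \<sigma> t * inner (transpose W ** X t) U)
     = (\<Sum>k\<in>UNIV. \<Sum>l\<in>UNIV. \<Sum>i\<in>UNIV. W$i$k * S i l * U$k$l)"
    unfolding S_def by (rule sum_expand)
  also have "\<dots> \<le> (\<Sum>k\<in>UNIV. \<Sum>l\<in>UNIV. \<Sum>i\<in>UNIV. \<bar>U$k$l\<bar> * \<bar>S i l\<bar>)"
  proof (intro sum_mono)
    fix k l i
    have "W$i$k * S i l * U$k$l \<le> \<bar>W$i$k * S i l * U$k$l\<bar>" by simp
    also have "\<dots> = \<bar>W$i$k\<bar> * (\<bar>U$k$l\<bar> * \<bar>S i l\<bar>)" by (simp add: abs_mult)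
    also have "\<dots> \<le> 1 * (\<bar>U$k$l\<bar> * \<bar>S i l\<bar>)" by (intro mult_right_mono Wb) auto
    finally show "W$i$k * S i l * U$k$l \<le> \<bar>U$k$l\<bar> * \<bar>S i l\<bar>" by simp
  qed
  also have "\<dots> = (\<Sum>k\<in>UNIV. \<Sum>l\<in>UNIV. \<bar>U$k$l\<bar> * (\<Sum>i\<in>UNIV. \<bar>S i l\<bar>))"
    by (simp add: sum_distrib_left)
  also have "\<dots> \<le> (\<Sum>k\<in>UNIV. \<Sum>l\<in>UNIV. \<bar>U$k$l\<bar> * G)"
    by (intro sum_mono mult_left_mono Gl) auto
  also have "\<dots> = G * (\<Sum>k\<in>UNIV. \<Sum>l\<in>UNIV. \<bar>U$k$l\<bar>)"
    by (simp add: sum_distrib_left sum_distrib_right mult_ac)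
  also have "\<dots> \<le> G * real CARD('n)"
    by (intro mult_left_mono abs_entry_sum U G0)
  finally show ?thesis unfolding G_def S_def by (simp add: mult_ac)
qed


lemma G_le_Z:
  fixes X :: "nat \<Rightarrow> real^'n^'m" and \<sigma> :: "nat \<Rightarrow> real"
  shows "Max (range (\<lambda>l. \<Sum>i\<in>UNIV. \<bar>\<Sum>t<N. \<sigma> t * X t $i$l\<bar>))
    \<le> Max ((\<lambda>(l,s). \<Sum>t<N. \<sigma> t * (\<Sum>i\<in>UNIV. s i * X t $i$l))
             ` (UNIV \<times> PiE (UNIV::'m set) (\<lambda>_. {-1,1::real})))"
proof -
  define S where "S = (\<lambda>i l. \<Sum>t<N. \<sigma> t * X t $i$l)"
  have "Max (range (\<lambda>l. \<Sum>i\<in>UNIV. \<bar>S i l\<bar>)) \<in> range (\<lambda>l. \<Sum>i\<in>UNIV. \<bar>S i l\<bar>)"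
    by (intro Max_in) auto
  then obtain l0 where l0: "Max (range (\<lambda>l. \<Sum>i\<in>UNIV. \<bar>S i l\<bar>)) = (\<Sum>i\<in>UNIV. \<bar>S i l0\<bar>)"
    by (metis (no_types, lifting) rangeE)
  define s0 where "s0 = (\<lambda>i::'m. if S i l0 \<ge> 0 then 1 else (-1::real))"
  have s0in: "s0 \<in> PiE (UNIV::'m set) (\<lambda>_. {-1,1::real})"
    unfolding s0_def by (auto simp: PiE_iff)
  have "(\<Sum>i\<in>UNIV. \<bar>S i l0\<bar>) = (\<Sum>i\<in>UNIV. s0 i * S i l0)"
    by (intro sum.cong refl) (auto simp: s0_def)
  also have "\<dots> = (\<Sum>t<N. \<sigma> t * (\<Sum>i\<in>UNIV. s0 i * X t $i$l0))"
    unfolding S_def by (simp add: sum_distrib_left mult_ac sum.swap[of _ UNIV "{..<N}"])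
  also have "\<dots> \<le> Max ((\<lambda>(l,s). \<Sum>t<N. \<sigma> t * (\<Sum>i\<in>UNIV. s i * X t $i$l))
             ` (UNIV \<times> PiE (UNIV::'m set) (\<lambda>_. {-1,1::real})))"
    using s0in by (intro Max_ge finite_imageI finite_cartesian_product finite_PiE) auto
  finally show ?thesis using l0 unfolding S_def by simp
qed


theorem lemma5:
  fixes V :: "real^'n^'n" and X :: "nat \<Rightarrow> real^'n^'m" and N :: nat
  assumes "N \<ge> 1"
    and "V \<noteq> 0"
    and "transpose V = V"
    and "\<forall>Y :: real^'n^'m. inner (transpose Y ** Y) (V /\<^sub>R norm V) \<ge> 0"
  shows "rademacher N
           {(\<lambda>i. inner (transpose W ** X i) (V /\<^sub>R norm V)) | W :: real^'n^'m. mat_norm_max W \<le> 1}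
         \<le> real CARD('n) * Max ((\<lambda>i. mat_norm1 (X i)) ` {..<N})
           * sqrt (2 * (real CARD('m) * ln 2 + ln (real CARD('n))) / real N)"
proof -
  define U where "U = V /\<^sub>R norm V"
  have U1: "norm U = 1" unfolding U_def using assms(2) by simp
  define A where "A = {(\<lambda>i. inner (transpose W ** X i) U) | W :: real^'n^'m. mat_norm_max W \<le> 1}"
  define Sg where "Sg = PiE {..<N} (\<lambda>_. {-1, 1::real})"
  define I where "I = (UNIV::'n set) \<times> PiE (UNIV::'m set) (\<lambda>_. {-1,1::real})"
  define a where "a = (\<lambda>(l::'n, s::'m \<Rightarrow> real) t. \<Sum>i\<in>UNIV. s i * X t $i$l)"
  define Z where "Z = (\<lambda>\<sigma>::nat \<Rightarrow> real. Max ((\<lambda>k. \<Sum>t<N. \<sigma> t * a k t) ` I))"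
  define Mx where "Mx = Max ((\<lambda>i. mat_norm1 (X i)) ` {..<N})"
  define n where "n = real CARD('n)"
  have npos: "n > 0" unfolding n_def by simp
  have finI: "finite I" unfolding I_def by (intro finite_cartesian_product finite_PiE) auto
  have cardI: "card I = CARD('n) * 2 ^ CARD('m)"
    unfolding I_def by (simp add: card_cartesian_product card_PiE numeral_2_eq_2)
  have cardI2: "card I \<ge> 2"
  proof -
    have h1: "(2::nat) \<le> 2 ^ CARD('m)" using power_increasing[of 1 "CARD('m)" "2::nat"] by simp
    have h2: "(2::nat) ^ CARD('m) \<le> CARD('n) * 2 ^ CARD('m)" by simp
    show ?thesis unfolding cardI by (rule order_trans[OF h1 h2])
  qed
  have bnd: "\<bar>a k t\<bar> \<le> Mx" if "k \<in> I" "t < N" for k t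
  proof -
    obtain l s where k: "k = (l, s)" by (cases k)
    have s: "s \<in> PiE (UNIV::'m set) (\<lambda>_. {-1,1::real})"
      using that(1) unfolding I_def k by simp
    have "\<bar>a k t\<bar> \<le> (\<Sum>i\<in>UNIV. \<bar>s i * X t $i$l\<bar>)"
      unfolding k a_def by simp
    also have "\<dots> = (\<Sum>i\<in>UNIV. \<bar>X t $i$l\<bar>)"
    proof (intro sum.cong refl)
      fix i
      have "s i \<in> {-1,1}" using s by (auto simp: PiE_iff)
      thus "\<bar>s i * X t $i$l\<bar> = \<bar>X t $i$l\<bar>" by (auto simp: abs_mult)
    qed
    also have "\<dots> \<le> mat_norm1 (X t)" unfolding mat_norm1_def by (rule Max_ge) auto
    also have "\<dots> \<le> Mx" unfolding Mx_def using that(2) by (intro Max_ge) auto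
    finally show ?thesis .
  qed
  have mass: "(\<Sum>\<sigma>\<in>Sg. Z \<sigma>) / 2 ^ N \<le> Mx * sqrt (2 * real N * ln (real (card I)))"
    unfolding Sg_def Z_def by (rule massart[OF finI cardI2 assms(1)]) (rule bnd)
  have Ane: "A \<noteq> {}"
  proof -
    have "mat_norm_max (0::real^'n^'m) = 0"
    proof -
      have "{\<bar>(0::real^'n^'m)$i$j\<bar> | i j. True} = {0}" by auto
      thus ?thesis unfolding mat_norm_max_def by simp
    qed
    hence "mat_norm_max (0::real^'n^'m) \<le> 1" by simp
    thus ?thesis unfolding A_def by blast
  qed
  have sup: "(SUP v\<in>A. \<Sum>i<N. \<sigma> i * v i) \<le> n * Z \<sigma>" for \<sigma>
  proof (rule cSUP_least[OF Ane])
    fix v assume "v \<in> A"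
    then obtain W :: "real^'n^'m" where W: "mat_norm_max W \<le> 1" and v: "v = (\<lambda>i. inner (transpose W ** X i) U)"
      unfolding A_def by auto
    have "(\<Sum>i<N. \<sigma> i * v i) \<le> n * Max (range (\<lambda>l. \<Sum>i\<in>UNIV. \<bar>\<Sum>t<N. \<sigma> t * X t $i$l\<bar>))"
      unfolding v n_def by (rule pointwise[OF W U1])
    also have "\<dots> \<le> n * Z \<sigma>"
    proof -
      have eq: "(\<lambda>k. \<Sum>t<N. \<sigma> t * a k t) = (\<lambda>(l,s). \<Sum>t<N. \<sigma> t * (\<Sum>i\<in>UNIV. s i * X t $i$l))"
        by (rule ext) (auto simp: a_def split: prod.splits)
      show ?thesis
        unfolding Z_def eq I_def using npos by (intro mult_left_mono G_le_Z) auto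
    qed
    finally show "(\<Sum>i<N. \<sigma> i * v i) \<le> n * Z \<sigma>" .
  qed
  have "rademacher N A = (1 / real N) * ((\<Sum>\<sigma>\<in>Sg. (SUP v\<in>A. \<Sum>i<N. \<sigma> i * v i)) / 2 ^ N)"
    unfolding rademacher_def Sg_def ..
  also have "\<dots> \<le> (1 / real N) * ((\<Sum>\<sigma>\<in>Sg. n * Z \<sigma>) / 2 ^ N)"
    by (intro mult_left_mono divide_right_mono sum_mono sup) auto
  also have "\<dots> = (n / real N) * ((\<Sum>\<sigma>\<in>Sg. Z \<sigma>) / 2 ^ N)"
    by (simp add: sum_distrib_left[symmetric])
  also have "\<dots> \<le> (n / real N) * (Mx * sqrt (2 * real N * ln (real (card I))))"
    using npos assms(1) by (intro mult_left_mono mass) auto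
  also have "\<dots> = n * Mx * sqrt (2 * (real CARD('m) * ln 2 + ln (real CARD('n))) / real N)"
  proof -
    define L where "L = real CARD('m) * ln 2 + ln (real CARD('n))"
    have lnI: "ln (real (card I)) = L"
      unfolding cardI L_def by (simp add: ln_mult ln_realpow)
    have Npos: "real N > 0" using assms(1) by simp
    have "sqrt (2 * L / real N) = sqrt (2 * real N * L / (real N)^2)"
      using Npos by (simp add: power2_eq_square)
    also have "\<dots> = sqrt (2 * real N * L) / real N"
      using Npos by (simp add: real_sqrt_divide)
    finally show ?thesis unfolding lnI L_def[symmetric] by simp
  qed
  finally show ?thesis unfolding A_def U_def n_def Mx_def .
qed

end
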